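(* For any metrized graph $\Gamma$ with $v$ vertices, $$Kf(\Gamma) \leq \frac{v^2}{4}\, y(\Gamma).$$
   Context: A metrized graph $\Gamma$ is a finite connected graph (multiple edges and self-loops allowed) each of whose edges is identified with a closed segment of positive length, with a finite nonempty vertex set $V(\Gamma)$ containing every point of valence $\neq2$; $v=\#V(\Gamma)$, $L_i$ the length of $e_i$, $r$ the effective resistance (edges as resistors of resistance equal to length). $Kf(\Gamma)=\frac12\sum_{p,q\in V(\Gamma)}r(p,q)$. For an edge $e_i$ with end points $p_i,q_i$: if $\Gamma-e_i$ (interior deleted) is connected, $R_i$ is the effective resistance between $p_i,q_i$ in $\Gamma-e_i$, $R_{a_i,p}=\hat j_{p_i}(p,q_i)$, $R_{b_i,p}=\hat j_{q_i}(p,p_i)$ with $\hat j_z(x,y)$ the voltage function of $\Gamma-e_i$ (potential at $x$ when unit current enters at $y$ and exits at $z$, potential $0$ at $z$); if $e_i$ is a bridge, $R_{a_i,p}=0,R_{b_i,p}=R_i$ for $p$ in the component of $\Gamma-e_i$ containing $p_i$ and $R_{a_i,p}=R_i,R_{b_i,p}=0$ otherwise, with every expression in $R_i$ interpreted as its limit as $R_i\to\infty$; for a self-loop $R_i=0$. For a fixed vertex $p$ (independent of choice), $y(\Gamma)=\frac14\sum_{e_i}\frac{L_iR_i^2}{(L_i+R_i)^2}+\frac34\sum_{e_i}\frac{L_i(R_{a_i,p}-R_{b_i,p})^2}{(L_i+R_i)^2}$. *)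

theory Defs
  imports Complex_Main
begin

text \<open>A metrized graph is presented combinatorially: a finite nonempty vertex set V,
  a finite set E of edge labels, each edge e having end points src e, tgt e in V
  (src e = tgt e for a self-loop; multiple edges allowed) and length len e > 0.
  Interior points of edges have valence 2, so every point of valence other than 2 lies in V.\<close>

definition edge_rel :: "'e set \<Rightarrow> ('e \<Rightarrow> 'v) \<Rightarrow> ('e \<Rightarrow> 'v) \<Rightarrow> ('v \<times> 'v) set" where
  "edge_rel E src tgt = {(src e, tgt e) | e. e \<in> E} \<union> {(tgt e, src e) | e. e \<in> E}"

definition connected_net :: "'v set \<Rightarrow> 'e set \<Rightarrow> ('e \<Rightarrow> 'v) \<Rightarrow> ('e \<Rightarrow> 'v) \<Rightarrow> bool" where
  "connected_net V E src tgt \<longleftrightarrow> (\<forall>x\<in>V. \<forall>y\<in>V. (x, y) \<in> (edge_rel E src tgt)\<^sup>*)"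

definition metrized_graph ::
  "'v set \<Rightarrow> 'e set \<Rightarrow> ('e \<Rightarrow> 'v) \<Rightarrow> ('e \<Rightarrow> 'v) \<Rightarrow> ('e \<Rightarrow> real) \<Rightarrow> bool" where
  "metrized_graph V E src tgt len \<longleftrightarrow>
     finite V \<and> V \<noteq> {} \<and> finite E \<and>
     (\<forall>e\<in>E. src e \<in> V \<and> tgt e \<in> V \<and> len e > 0) \<and>
     connected_net V E src tgt"

text \<open>Kirchhoff conditions: f is the potential (supported on V) of the resistor network
  (edge e = resistor of resistance len e) when unit current enters at y and exits at z,
  normalised by f z = 0.\<close>

definition is_voltage ::
  "'v set \<Rightarrow> 'e set \<Rightarrow> ('e \<Rightarrow> 'v) \<Rightarrow> ('e \<Rightarrow> 'v) \<Rightarrow> ('e \<Rightarrow> real) \<Rightarrow> 'v \<Rightarrow> 'v \<Rightarrow> ('v \<Rightarrow> real) \<Rightarrow> bool" where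
  "is_voltage V E src tgt len y z f \<longleftrightarrow>
     (\<forall>w. w \<notin> V \<longrightarrow> f w = 0) \<and> f z = 0 \<and>
     (\<forall>w\<in>V. (\<Sum>e\<in>E. (if src e = w then (f w - f (tgt e)) / len e else 0)
                   + (if tgt e = w then (f w - f (src e)) / len e else 0))
            = (if w = y then 1 else 0) - (if w = z then 1 else 0))"

text \<open>Voltage function j_z(x,y): potential at x when unit current enters at y and exits
  at z, with potential 0 at z.\<close>

definition voltage ::
  "'v set \<Rightarrow> 'e set \<Rightarrow> ('e \<Rightarrow> 'v) \<Rightarrow> ('e \<Rightarrow> 'v) \<Rightarrow> ('e \<Rightarrow> real) \<Rightarrow> 'v \<Rightarrow> 'v \<Rightarrow> 'v \<Rightarrow> real" where
  "voltage V E src tgt len z x y = (THE f. is_voltage V E src tgt len y z f) x"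

definition eff_res ::
  "'v set \<Rightarrow> 'e set \<Rightarrow> ('e \<Rightarrow> 'v) \<Rightarrow> ('e \<Rightarrow> 'v) \<Rightarrow> ('e \<Rightarrow> real) \<Rightarrow> 'v \<Rightarrow> 'v \<Rightarrow> real" where
  "eff_res V E src tgt len x y = voltage V E src tgt len y x x"

definition kirchhoff_index ::
  "'v set \<Rightarrow> 'e set \<Rightarrow> ('e \<Rightarrow> 'v) \<Rightarrow> ('e \<Rightarrow> 'v) \<Rightarrow> ('e \<Rightarrow> real) \<Rightarrow> real" where
  "kirchhoff_index V E src tgt len =
     (1/2) * (\<Sum>p\<in>V. \<Sum>q\<in>V. eff_res V E src tgt len p q)"

text \<open>Summand of the first sum of y(Gamma) for edge e.  Gamma - e has vertex set V and
  edge set E - {e}.  For a bridge the expression is its limit as R_i \<rightarrow> \<infinity>.\<close>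

definition y_term1 ::
  "'v set \<Rightarrow> 'e set \<Rightarrow> ('e \<Rightarrow> 'v) \<Rightarrow> ('e \<Rightarrow> 'v) \<Rightarrow> ('e \<Rightarrow> real) \<Rightarrow> 'e \<Rightarrow> real" where
  "y_term1 V E src tgt len e =
     (if connected_net V (E - {e}) src tgt then
        (let R = eff_res V (E - {e}) src tgt len (src e) (tgt e)
         in len e * R\<^sup>2 / (len e + R)\<^sup>2)
      else Lim at_top (\<lambda>R::real. len e * R\<^sup>2 / (len e + R)\<^sup>2))"

definition y_term2 ::
  "'v set \<Rightarrow> 'e set \<Rightarrow> ('e \<Rightarrow> 'v) \<Rightarrow> ('e \<Rightarrow> 'v) \<Rightarrow> ('e \<Rightarrow> real) \<Rightarrow> 'v \<Rightarrow> 'e \<Rightarrow> real" where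
  "y_term2 V E src tgt len p e =
     (if connected_net V (E - {e}) src tgt then
        (let R = eff_res V (E - {e}) src tgt len (src e) (tgt e);
             Ra = voltage V (E - {e}) src tgt len (src e) p (tgt e);
             Rb = voltage V (E - {e}) src tgt len (tgt e) p (src e)
         in len e * (Ra - Rb)\<^sup>2 / (len e + R)\<^sup>2)
      else if (p, src e) \<in> (edge_rel (E - {e}) src tgt)\<^sup>*
      then Lim at_top (\<lambda>R::real. len e * (0 - R)\<^sup>2 / (len e + R)\<^sup>2)
      else Lim at_top (\<lambda>R::real. len e * (R - 0)\<^sup>2 / (len e + R)\<^sup>2))"

definition y_inv ::
  "'v set \<Rightarrow> 'e set \<Rightarrow> ('e \<Rightarrow> 'v) \<Rightarrow> ('e \<Rightarrow> 'v) \<Rightarrow> ('e \<Rightarrow> real) \<Rightarrow> 'v \<Rightarrow> real" where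
  "y_inv V E src tgt len p =
     (1/4) * (\<Sum>e\<in>E. y_term1 V E src tgt len e)
     + (3/4) * (\<Sum>e\<in>E. y_term2 V E src tgt len p e)"

end

theory Submission
  imports Defs "Jordan_Normal_Form.Determinant"
begin


lemma lin_sum:
  fixes F :: "('v \<Rightarrow> real) \<Rightarrow> ('v \<Rightarrow> real)"
  assumes add: "\<And>f g. F (\<lambda>w. f w + g w) = (\<lambda>w. F f w + F g w)"
   and scal: "\<And>c f. F (\<lambda>w. c * f w) = (\<lambda>w. c * F f w)"
  fixes n :: nat
  shows "F (\<lambda>w. \<Sum>j<n. c j * u j w) w = (\<Sum>j<n. c j * F (u j) w)"
proof (induction n)
  case 0
  have "F (\<lambda>w. 0 * (0::real)) = (\<lambda>w. 0 * F (\<lambda>w. 0) w)" using scal[of 0 "\<lambda>w. 0"] by simp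
  then show ?case by simp
next
  case (Suc n)
  have "F (\<lambda>w. \<Sum>j<Suc n. c j * u j w) = F (\<lambda>w. (\<Sum>j<n. c j * u j w) + c n * u n w)"
    by simp
  also have "\<dots> = (\<lambda>w. F (\<lambda>w. \<Sum>j<n. c j * u j w) w + F (\<lambda>w. c n * u n w) w)"
    by (rule add)
  finally show ?case using Suc scal by simp
qed

lemma fin_inj_surj:
  fixes F :: "('v \<Rightarrow> real) \<Rightarrow> ('v \<Rightarrow> real)"
  assumes fin: "finite V"
   and add: "\<And>f g. F (\<lambda>w. f w + g w) = (\<lambda>w. F f w + F g w)"
   and scal: "\<And>c f. F (\<lambda>w. c * f w) = (\<lambda>w. c * F f w)"
   and inj: "\<And>f. (\<forall>w. w\<notin>V \<longrightarrow> f w = 0) \<Longrightarrow> (\<forall>w\<in>V. F f w = 0) \<Longrightarrow> \<forall>w\<in>V. f w = 0"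
  shows "\<exists>f. (\<forall>w. w\<notin>V \<longrightarrow> f w = 0) \<and> (\<forall>w\<in>V. F f w = g w)"
proof -
  define n where "n = card V"
  obtain \<nu> where bij: "bij_betw \<nu> {0..<n} V" using ex_bij_betw_nat_finite[OF fin] n_def by blast
  define u where "u j = (\<lambda>w. if w = \<nu> j then 1 else (0::real))" for j
  define A where "A = mat n n (\<lambda>(i,j). F (u j) (\<nu> i))"
  define fx where "fx x = (\<lambda>w. if w \<in> V then \<Sum>j<n. x $ j * u j w else 0)" for x :: "real vec"
  have fx2: "fx x = (\<lambda>w. \<Sum>j<n. x $ j * u j w)" for x
  proof
    fix w show "fx x w = (\<Sum>j<n. x $ j * u j w)"
    proof (cases "w \<in> V")
      case False
      then have "u j w = 0" if "j < n" for j using bij that unfolding u_def bij_betw_def by auto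
      then show ?thesis using False by (simp add: fx_def)
    qed (simp add: fx_def)
  qed
  have Av: "(A *\<^sub>v x) $ i = F (fx x) (\<nu> i)" if "i < n" "x \<in> carrier_vec n" for x i
  proof -
    have "(A *\<^sub>v x) $ i = (\<Sum>j\<in>{0..<n}. F (u j) (\<nu> i) * x $ j)"
      using that by (simp add: A_def scalar_prod_def)
    also have "\<dots> = (\<Sum>j<n. x $ j * F (u j) (\<nu> i))"
      by (simp add: lessThan_atLeast0 mult.commute)
    also have "\<dots> = F (fx x) (\<nu> i)"
      unfolding fx2 by (rule lin_sum[symmetric, OF add scal])
    finally show ?thesis .
  qed
  have fxnu: "fx x (\<nu> j) = x $ j" if "j < n" for x j
  proof -
    have inj\<nu>: "inj_on \<nu> {0..<n}" using bij bij_betw_def by blast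
    have "fx x (\<nu> j) = (\<Sum>k<n. x $ k * u k (\<nu> j))" by (simp add: fx2)
    also have "\<dots> = (\<Sum>k<n. if k = j then x $ k else 0)"
      apply (rule sum.cong, simp)
      using inj\<nu> that unfolding u_def inj_on_def by auto
    also have "\<dots> = x $ j" using that by simp
    finally show ?thesis .
  qed
  have Acar: "A \<in> carrier_mat n n" by (simp add: A_def)
  have "det A \<noteq> 0"
  proof
    assume "det A = 0"
    then obtain x where x: "x \<in> carrier_vec n" "x \<noteq> 0\<^sub>v n" "A *\<^sub>v x = 0\<^sub>v n"
      using det_0_iff_vec_prod_zero_field[OF Acar] by blast
    have "\<forall>w\<in>V. F (fx x) w = 0"
    proof
      fix w assume "w \<in> V"
      then obtain i where "i < n" "w = \<nu> i" using bij unfolding bij_betw_def by auto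
      then show "F (fx x) w = 0" using Av[of i x] x by (metis index_zero_vec(1))
    qed
    then have "\<forall>w\<in>V. fx x w = 0" using inj[of "fx x"] by (simp add: fx_def)
    then have "x $ j = 0" if "j < n" for j
    proof -
      have "\<nu> j \<in> V" using bij that unfolding bij_betw_def by auto
      then show ?thesis using fxnu[OF that] \<open>\<forall>w\<in>V. fx x w = 0\<close> by auto
    qed
    then have "x = 0\<^sub>v n" using x(1) by (intro eq_vecI) auto
    with x(2) show False by simp
  qed
  from det_non_zero_imp_unit[OF Acar this, of "()"]
  obtain B where B: "B \<in> carrier_mat n n" "A * B = 1\<^sub>m n"
    unfolding Units_def ring_mat_def by auto
  define gv where "gv = vec n (\<lambda>i. g (\<nu> i))"
  define x where "x = B *\<^sub>v gv"
  have xc: "x \<in> carrier_vec n" using B by (simp add: x_def gv_def)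
  have "A *\<^sub>v x = gv"
  proof -
    have gc: "gv \<in> carrier_vec n" by (simp add: gv_def)
    have "A *\<^sub>v (B *\<^sub>v gv) = (A * B) *\<^sub>v gv"
      using assoc_mult_mat_vec[OF Acar B(1) gc] by simp
    also have "\<dots> = gv" using B(2) gc by simp
    finally show ?thesis unfolding x_def .
  qed
  then have "\<forall>w\<in>V. F (fx x) w = g w"
    using Av[OF _ xc] bij unfolding bij_betw_def gv_def by force
  moreover have "\<forall>w. w\<notin>V \<longrightarrow> fx x w = 0" by (simp add: fx_def)
  ultimately show ?thesis by blast
qed




definition lapl :: "'e set \<Rightarrow> ('e \<Rightarrow> 'v) \<Rightarrow> ('e \<Rightarrow> 'v) \<Rightarrow> ('e \<Rightarrow> real) \<Rightarrow> ('v \<Rightarrow> real) \<Rightarrow> 'v \<Rightarrow> real" where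
  "lapl E src tgt len f w = (\<Sum>e\<in>E. (if src e = w then (f w - f (tgt e)) / len e else 0)
                   + (if tgt e = w then (f w - f (src e)) / len e else 0))"

definition bform :: "'e set \<Rightarrow> ('e \<Rightarrow> 'v) \<Rightarrow> ('e \<Rightarrow> 'v) \<Rightarrow> ('e \<Rightarrow> real) \<Rightarrow> ('v \<Rightarrow> real) \<Rightarrow> ('v \<Rightarrow> real) \<Rightarrow> real" where
  "bform E src tgt len f g = (\<Sum>e\<in>E. (f (src e) - f (tgt e)) * (g (src e) - g (tgt e)) / len e)"

lemma is_voltage_lapl: "is_voltage V E src tgt len y z f \<longleftrightarrow> (\<forall>w. w \<notin> V \<longrightarrow> f w = 0) \<and> f z = 0 \<and>
   (\<forall>w\<in>V. lapl E src tgt len f w = (if w = y then 1 else 0) - (if w = z then 1 else 0))"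
  unfolding is_voltage_def lapl_def by simp

lemma lap_add: "lapl E src tgt len (\<lambda>w. f w + g w) w = lapl E src tgt len f w + lapl E src tgt len g w"
  unfolding lapl_def sum.distrib[symmetric]
  by (rule sum.cong) (auto simp: diff_divide_distrib add_divide_distrib)

lemma lap_diff: "lapl E src tgt len (\<lambda>w. f w - g w) w = lapl E src tgt len f w - lapl E src tgt len g w"
  unfolding lapl_def sum_subtractf[symmetric]
  by (rule sum.cong) (auto simp: diff_divide_distrib add_divide_distrib)

lemma lap_scale: "lapl E src tgt len (\<lambda>w. c * f w) w = c * lapl E src tgt len f w"
  unfolding lapl_def sum_distrib_left
  by (rule sum.cong) (auto simp: algebra_simps)

lemma lap_remove:
  assumes "finite E" "e \<in> E"
  shows "lapl E src tgt len f w = lapl (E - {e}) src tgt len f w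
     + ((if src e = w then (f w - f (tgt e)) / len e else 0)
                   + (if tgt e = w then (f w - f (src e)) / len e else 0))"
  unfolding lapl_def by (subst sum.remove[OF assms]) (rule add.commute)

lemma sq_div_nonneg: "0 < l \<Longrightarrow> 0 \<le> (t::real) * t / l"
  using divide_nonneg_pos[of "t*t" l] by simp

lemma mono_trick:
  fixes m :: "real \<Rightarrow> real"
  assumes "mono m" "mono (\<lambda>t. t - m t)"
  shows "(m x - m y)^2 \<le> (m x - m y) * (x - y)"
proof -
  have "0 \<le> (m x - m y) * ((x - m x) - (y - m y))"
  proof (cases "y \<le> x")
    case True
    then have "m y \<le> m x" "y - m y \<le> x - m x" using assms unfolding mono_def by auto
    then show ?thesis by (intro mult_nonneg_nonneg) auto
  next
    case False
    then have "m x \<le> m y" "x - m x \<le> y - m y" using assms unfolding mono_def by auto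
    then show ?thesis by (intro mult_nonpos_nonpos) auto
  qed
  then show ?thesis by (simp add: power2_eq_square algebra_simps)
qed

locale net =
  fixes V :: "'v set" and E :: "'e set" and src tgt :: "'e \<Rightarrow> 'v" and len :: "'e \<Rightarrow> real"
  assumes finV: "finite V" and finE: "finite E"
    and ends: "\<And>e. e \<in> E \<Longrightarrow> src e \<in> V \<and> tgt e \<in> V \<and> len e > 0"
    and conn: "connected_net V E src tgt"
begin

abbreviation "Lap \<equiv> lapl E src tgt len"
abbreviation "Bf \<equiv> bform E src tgt len"
definition "phi y z = (THE f. is_voltage V E src tgt len y z f)"

lemma green: "(\<Sum>w\<in>V. f w * Lap g w) = Bf f g"
proof -
  have "(\<Sum>w\<in>V. f w * Lap g w) = (\<Sum>e\<in>E. \<Sum>w\<in>V. f w * ((if src e = w then (g w - g (tgt e)) / len e else 0) + (if tgt e = w then (g w - g (src e)) / len e else 0)))"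
    unfolding lapl_def sum_distrib_left by (rule sum.swap)
  also have "\<dots> = (\<Sum>e\<in>E. (f (src e) - f (tgt e)) * (g (src e) - g (tgt e)) / len e)"
  proof (rule sum.cong[OF refl])
    fix e assume e: "e \<in> E"
    have "(\<Sum>w\<in>V. f w * ((if src e = w then (g w - g (tgt e)) / len e else 0) + (if tgt e = w then (g w - g (src e)) / len e else 0)))
       = (\<Sum>w\<in>V. (if src e = w then f w * (g w - g (tgt e)) / len e else 0)) + (\<Sum>w\<in>V. (if tgt e = w then f w * (g w - g (src e)) / len e else 0))"
      unfolding sum.distrib[symmetric] by (rule sum.cong) auto
    also have "\<dots> = f (src e) * (g (src e) - g (tgt e)) / len e + f (tgt e) * (g (tgt e) - g (src e)) / len e"
      using ends[OF e] finV by (simp add: sum.delta')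
    also have "\<dots> = (f (src e) - f (tgt e)) * (g (src e) - g (tgt e)) / len e"
      by (simp add: add_divide_distrib[symmetric] algebra_simps)
    finally show "(\<Sum>w\<in>V. f w * ((if src e = w then (g w - g (tgt e)) / len e else 0) + (if tgt e = w then (g w - g (src e)) / len e else 0)))
       = (f (src e) - f (tgt e)) * (g (src e) - g (tgt e)) / len e" .
  qed
  finally show ?thesis unfolding bform_def .
qed

lemma sum_Lap: "(\<Sum>w\<in>V. Lap g w) = 0"
  using green[of "\<lambda>_. 1" g] by (simp add: bform_def)

lemma Bf_sym: "Bf f g = Bf g f"
  unfolding bform_def by (simp add: mult.commute)

lemma Bf_nonneg: "Bf f f \<ge> 0"
  unfolding bform_def using ends by (intro sum_nonneg divide_nonneg_pos) auto

lemma Bf_term_le: "e \<in> E \<Longrightarrow> (f (src e) - f (tgt e))^2 / len e \<le> Bf f f"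
  unfolding bform_def power2_eq_square
  by (rule member_le_sum[where f="\<lambda>e. (f (src e) - f (tgt e)) * (f (src e) - f (tgt e)) / len e"]) (use ends finE in \<open>auto intro!: sq_div_nonneg\<close>)

lemma Bf_zero_const:
  assumes "Bf f f = 0" "x \<in> V" "y \<in> V"
  shows "f x = f y"
proof -
  have all0: "\<forall>e\<in>E. (f (src e) - f (tgt e)) * (f (src e) - f (tgt e)) / len e = 0"
    using assms(1) finE ends unfolding bform_def by (subst sum_nonneg_eq_0_iff[symmetric]) (auto intro!: sq_div_nonneg)
  have edge: "f (src e) = f (tgt e)" if "e \<in> E" for e
    using all0 that ends[OF that] by auto
  have "(x, y) \<in> (edge_rel E src tgt)\<^sup>*" using conn assms unfolding connected_net_def by blast
  then show ?thesis
  proof (induction rule: rtrancl_induct)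
    case (step u w)
    then show ?case using edge unfolding edge_rel_def by auto
  qed simp
qed

lemma harm_const:
  assumes "\<forall>w\<in>V. Lap h w = 0" "x \<in> V" "y \<in> V"
  shows "h x = h y"
proof -
  have "Bf h h = 0" using green[of h h] assms(1) by simp
  then show ?thesis using Bf_zero_const assms by blast
qed

lemma volt_ex:
  assumes y: "y \<in> V" and z: "z \<in> V"
  shows "\<exists>f. is_voltage V E src tgt len y z f"
proof -
  define F where "F f = (\<lambda>w. if w \<in> V then (if w = z then f z else Lap f w) else 0)" for f
  define g where "g = (\<lambda>w. if w = z then 0 else (if w = y then 1 else 0) - (if w = z then 1 else (0::real)))"
  have "\<exists>f. (\<forall>w. w\<notin>V \<longrightarrow> f w = 0) \<and> (\<forall>w\<in>V. F f w = g w)"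
  proof (rule fin_inj_surj[OF finV])
    show "F (\<lambda>w. f w + h w) = (\<lambda>w. F f w + F h w)" for f h
      by (auto simp: F_def lap_add)
    show "F (\<lambda>w. c * f w) = (\<lambda>w. c * F f w)" for c f
      by (auto simp: F_def lap_scale)
    fix f assume f0: "\<forall>w. w \<notin> V \<longrightarrow> f w = 0" and Ff: "\<forall>w\<in>V. F f w = 0"
    have fz: "f z = 0" using Ff z by (auto simp: F_def)
    have L0: "Lap f w = 0" if "w \<in> V" "w \<noteq> z" for w using Ff that by (auto simp: F_def)
    have "(\<Sum>w\<in>V. Lap f w) = Lap f z + (\<Sum>w\<in>V-{z}. Lap f w)"
      using sum.remove[OF finV z] by simp
    also have "(\<Sum>w\<in>V-{z}. Lap f w) = 0" using L0 by (intro sum.neutral) auto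
    finally have "Lap f z = 0" using sum_Lap by simp
    then have "\<forall>w\<in>V. Lap f w = 0" using L0 by metis
    then show "\<forall>w\<in>V. f w = 0" using harm_const fz z by metis
  qed
  then obtain f where f0: "\<forall>w. w\<notin>V \<longrightarrow> f w = 0" and Ff: "\<forall>w\<in>V. F f w = g w" by blast
  have fz: "f z = 0" using Ff z by (auto simp: F_def g_def)
  have L: "Lap f w = (if w = y then 1 else 0)" if "w \<in> V" "w \<noteq> z" for w
    using Ff that by (auto simp: F_def g_def)
  have "(\<Sum>w\<in>V. Lap f w) = Lap f z + (\<Sum>w\<in>V-{z}. Lap f w)"
    using sum.remove[OF finV z] by simp
  also have "(\<Sum>w\<in>V-{z}. Lap f w) = (\<Sum>w\<in>V-{z}. if w = y then 1 else 0)"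
    using L by (intro sum.cong) auto
  also have "\<dots> = (if y \<noteq> z then 1 else 0)" using y finV by (simp add: sum.delta')
  finally have Lz: "Lap f z = (if y = z then 0 else -1)" using sum_Lap by (auto split: if_splits)
  have "is_voltage V E src tgt len y z f"
    unfolding is_voltage_lapl using f0 fz L Lz by auto
  then show ?thesis by blast
qed

lemma volt_uniq:
  assumes z: "z \<in> V" and f: "is_voltage V E src tgt len y z f" and g: "is_voltage V E src tgt len y z g"
  shows "f = g"
proof
  fix w
  have h: "\<forall>u\<in>V. Lap (\<lambda>u. f u - g u) u = 0"
    using f g unfolding is_voltage_lapl by (simp add: lap_diff)
  show "f w = g w"
  proof (cases "w \<in> V")
    case True
    then have "f w - g w = f z - g z" using harm_const[OF h True z] by simp
    then show ?thesis using f g unfolding is_voltage_lapl by simp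
  next
    case False then show ?thesis using f g unfolding is_voltage_lapl by simp
  qed
qed

lemma phi_volt: "y \<in> V \<Longrightarrow> z \<in> V \<Longrightarrow> is_voltage V E src tgt len y z (phi y z)"
  unfolding phi_def using volt_ex volt_uniq by (metis theI)

lemma phi_eq: "y \<in> V \<Longrightarrow> z \<in> V \<Longrightarrow> is_voltage V E src tgt len y z f \<Longrightarrow> phi y z = f"
  using phi_volt volt_uniq by blast

lemma phi_z: "y \<in> V \<Longrightarrow> z \<in> V \<Longrightarrow> phi y z z = 0"
  using phi_volt unfolding is_voltage_lapl by blast

lemma phi_lap: "y \<in> V \<Longrightarrow> z \<in> V \<Longrightarrow> w \<in> V \<Longrightarrow> Lap (phi y z) w = (if w = y then 1 else 0) - (if w = z then 1 else 0)"
  using phi_volt unfolding is_voltage_lapl by blast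

lemma green_phi:
  assumes "y \<in> V" "z \<in> V"
  shows "Bf f (phi y z) = f y - f z"
proof -
  have "Bf f (phi y z) = (\<Sum>w\<in>V. f w * ((if w = y then 1 else 0) - (if w = z then 1 else 0)))"
    using green[of f "phi y z"] phi_lap[OF assms] by simp
  also have "\<dots> = (\<Sum>w\<in>V. if w = y then f w else 0) - (\<Sum>w\<in>V. if w = z then f w else 0)"
    unfolding sum_subtractf[symmetric] by (rule sum.cong) auto
  also have "\<dots> = f y - f z" using assms finV by (simp add: sum.delta')
  finally show ?thesis .
qed

abbreviation "res x y \<equiv> phi x y x"

lemma res_energy: "x \<in> V \<Longrightarrow> y \<in> V \<Longrightarrow> Bf (phi x y) (phi x y) = res x y"
  using green_phi phi_z by simp

lemma res_nonneg: "x \<in> V \<Longrightarrow> y \<in> V \<Longrightarrow> res x y \<ge> 0"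
  using res_energy Bf_nonneg by metis

lemma res_self: "x \<in> V \<Longrightarrow> res x x = 0"
  using phi_z by blast

lemma recip: "x \<in> V \<Longrightarrow> y \<in> V \<Longrightarrow> z \<in> V \<Longrightarrow> phi y z x = phi x z y"
  using green_phi[of y z "phi x z"] green_phi[of x z "phi y z"] phi_z Bf_sym by simp

lemma harm_phi3:
  assumes "a \<in> V" "b \<in> V" "c \<in> V" "d \<in> V" "x \<in> V" "y \<in> V"
    and "\<forall>w\<in>V. Lap h w = 0"
  shows "h x = h y"
  using harm_const assms by blast

lemma res_sym:
  assumes "x \<in> V" "y \<in> V" shows "res x y = res y x"
proof -
  have "\<forall>w\<in>V. Lap (\<lambda>w. phi x y w + phi y x w) w = 0"
    using assms by (simp add: lap_add phi_lap)
  from harm_const[OF this assms] show ?thesis using phi_z assms by simp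
qed

lemma phi_antisym:
  assumes "a \<in> V" "b \<in> V" "w \<in> V" shows "phi b a w = res a b - phi a b w"
proof -
  have "\<forall>w\<in>V. Lap (\<lambda>w. phi b a w + phi a b w) w = 0"
    using assms by (simp add: lap_add phi_lap)
  from harm_const[OF this assms(3) assms(1)] show ?thesis using phi_z assms by simp
qed

lemma K4:
  assumes a: "a \<in> V" and b: "b \<in> V" and x: "x \<in> V"
  shows "2 * phi a b x = res x b + res a b - res x a"
proof -
  have "\<forall>w\<in>V. Lap (\<lambda>w. phi x b w - phi a b w - phi x a w) w = 0"
    using assms by (simp add: lap_diff phi_lap)
  from harm_const[OF this a x]
  have "phi x b a - phi a b a - phi x a a = phi x b x - phi a b x - phi x a x" .
  moreover have "phi x b a = phi a b x" using recip assms by metis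
  moreover have "phi x a a = 0" using phi_z assms by blast
  ultimately show ?thesis by simp
qed

lemma maxprin:
  assumes a: "a \<in> V" and b: "b \<in> V" and p: "p \<in> V"
  shows "0 \<le> phi a b p \<and> phi a b p \<le> res a b"
proof -
  let ?\<phi> = "phi a b"
  let ?c = "res a b"
  have c0: "?c \<ge> 0" using res_nonneg a b by blast
  have trick: "Bf (\<lambda>w. m (?\<phi> w)) (\<lambda>w. m (?\<phi> w)) \<le> Bf (\<lambda>w. m (?\<phi> w)) ?\<phi>"
    if "mono m" "mono (\<lambda>t. t - m t)" for m
    unfolding bform_def
  proof (rule sum_mono)
    fix e assume "e \<in> E"
    then have "len e > 0" using ends by blast
    then show "(m (?\<phi> (src e)) - m (?\<phi> (tgt e))) * (m (?\<phi> (src e)) - m (?\<phi> (tgt e))) / len e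
       \<le> (m (?\<phi> (src e)) - m (?\<phi> (tgt e))) * (?\<phi> (src e) - ?\<phi> (tgt e)) / len e"
      using mono_trick[OF that, of "?\<phi> (src e)" "?\<phi> (tgt e)"]
      by (intro divide_right_mono) (auto simp: power2_eq_square)
  qed
  have bz: "?\<phi> b = 0" using phi_z a b by blast
  define m1 where "m1 t = min t (0::real)" for t
  have "mono m1" "mono (\<lambda>t. t - m1 t)" unfolding m1_def mono_def by auto
  from trick[OF this] have "Bf (\<lambda>w. m1 (?\<phi> w)) (\<lambda>w. m1 (?\<phi> w)) \<le> m1 ?c - m1 (?\<phi> b)"
    using green_phi[OF a b] by simp
  also have "\<dots> = 0" using c0 bz by (simp add: m1_def)
  finally have "Bf (\<lambda>w. m1 (?\<phi> w)) (\<lambda>w. m1 (?\<phi> w)) = 0" using Bf_nonneg by (metis order_antisym)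
  from Bf_zero_const[OF this p b] have "m1 (?\<phi> p) = 0" using bz by (simp add: m1_def)
  then have low: "0 \<le> ?\<phi> p" by (simp add: m1_def min_def split: if_splits)
  define m2 where "m2 t = max (t - ?c) (0::real)" for t
  have "mono m2" "mono (\<lambda>t. t - m2 t)" unfolding m2_def mono_def by auto
  from trick[OF this] have "Bf (\<lambda>w. m2 (?\<phi> w)) (\<lambda>w. m2 (?\<phi> w)) \<le> m2 ?c - m2 (?\<phi> b)"
    using green_phi[OF a b] by simp
  also have "\<dots> = 0" using c0 bz by (simp add: m2_def)
  finally have "Bf (\<lambda>w. m2 (?\<phi> w)) (\<lambda>w. m2 (?\<phi> w)) = 0" using Bf_nonneg by (metis order_antisym)
  from Bf_zero_const[OF this p a] have "m2 (?\<phi> p) = 0" by (simp add: m2_def)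
  then have "?\<phi> p \<le> ?c" by (simp add: m2_def max_def split: if_splits)
  with low show ?thesis by blast
qed

lemma res_le_len:
  assumes e: "e \<in> E" shows "res (src e) (tgt e) \<le> len e"
proof -
  let ?a = "src e" and ?b = "tgt e"
  have a: "?a \<in> V" and b: "?b \<in> V" and L: "len e > 0" using ends[OF e] by auto
  let ?c = "res ?a ?b"
  have "(phi ?a ?b ?a - phi ?a ?b ?b)^2 / len e \<le> ?c"
    using Bf_term_le[OF e, of "phi ?a ?b"] res_energy[OF a b] by simp
  then have "?c^2 / len e \<le> ?c" using phi_z[OF a b] by simp
  then have "?c^2 \<le> ?c * len e" using L by (simp add: field_simps)
  moreover have "?c \<ge> 0" using res_nonneg a b by blast
  ultimately show ?thesis using L by (cases "?c = 0") (auto simp: power2_eq_square)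
qed

end




lemma lim_L: fixes L :: real assumes L: "L > 0"
  shows "Lim at_top (\<lambda>R::real. L * R\<^sup>2 / (L + R)\<^sup>2) = L"
proof (rule tendsto_Lim)
  have 1: "((\<lambda>R::real. L / R) \<longlongrightarrow> 0) at_top"
    by (intro tendsto_divide_0[OF tendsto_const] filterlim_at_top_imp_at_infinity[OF filterlim_ident])
  have "((\<lambda>R::real. L * (1 / (1 + L / R))\<^sup>2) \<longlongrightarrow> L * (1 / (1 + 0))\<^sup>2) at_top"
    by (intro tendsto_intros 1) auto
  then have 2: "((\<lambda>R::real. L * (1 / (1 + L / R))\<^sup>2) \<longlongrightarrow> L) at_top" by simp
  have "\<forall>\<^sub>F R in at_top. L * (1 / (1 + L / R))\<^sup>2 = L * R\<^sup>2 / (L + R)\<^sup>2"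
    using eventually_gt_at_top[of 0]
  proof eventually_elim
    case (elim R)
    then have "1 + L / R = (L + R) / R" by (simp add: field_simps)
    then show ?case using elim L by (simp add: power_divide)
  qed
  from tendsto_cong[OF this] 2 show "((\<lambda>R::real. L * R\<^sup>2 / (L + R)\<^sup>2) \<longlongrightarrow> L) at_top" by simp
qed simp

lemma var_bound:
  fixes x :: "'v \<Rightarrow> real" assumes fin: "finite V"
  shows "(\<Sum>p\<in>V. \<Sum>q\<in>V. (x q - x p)^2) \<le> 2 * real (card V) * (\<Sum>p\<in>V. (x p)^2)"
proof -
  have inner: "(\<Sum>q\<in>V. (x q - x p)^2) = (\<Sum>q\<in>V. (x q)^2) + real (card V) * (x p)^2 - 2 * x p * (\<Sum>q\<in>V. x q)" for p
  proof -
    have "(\<Sum>q\<in>V. (x q - x p)^2) = (\<Sum>q\<in>V. (x q)^2 + (x p)^2 - 2 * x p * x q)"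
      by (rule sum.cong) (auto simp: power2_diff algebra_simps)
    also have "\<dots> = (\<Sum>q\<in>V. (x q)^2) + real (card V) * (x p)^2 - 2 * x p * (\<Sum>q\<in>V. x q)"
      by (simp add: sum.distrib sum_subtractf sum_distrib_left)
    finally show ?thesis .
  qed
  have "(\<Sum>p\<in>V. \<Sum>q\<in>V. (x q - x p)^2) = (\<Sum>p\<in>V. (\<Sum>q\<in>V. (x q)^2) + real (card V) * (x p)^2 - 2 * x p * (\<Sum>q\<in>V. x q))"
    by (simp add: inner)
  also have "\<dots> = (\<Sum>p\<in>V. (\<Sum>q\<in>V. (x q)^2)) + (\<Sum>p\<in>V. real (card V) * (x p)^2) - (\<Sum>p\<in>V. 2 * x p * (\<Sum>q\<in>V. x q))"
    by (simp add: sum.distrib sum_subtractf)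
  also have "\<dots> = 2 * real (card V) * (\<Sum>p\<in>V. (x p)^2) - 2 * (\<Sum>p\<in>V. x p)^2"
    by (simp add: sum_distrib_left[symmetric] sum_distrib_right[symmetric] power2_eq_square)
  finally show ?thesis by simp
qed

context net
begin

definition "sres e u = res (src e) u - res (tgt e) u"
definition "Epot p = (\<Sum>e\<in>E. (sres e p)^2 / len e)"

lemma phi_edge_diff:
  assumes p: "p \<in> V" and q: "q \<in> V" and e: "e \<in> E"
  shows "phi p q (src e) - phi p q (tgt e) = (sres e q - sres e p) / 2"
proof -
  have a: "src e \<in> V" and b: "tgt e \<in> V" using ends[OF e] by auto
  have "2 * phi p q (src e) = res (src e) q + res p q - res (src e) p" using K4[OF p q a] .
  moreover have "2 * phi p q (tgt e) = res (tgt e) q + res p q - res (tgt e) p" using K4[OF p q b] .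
  ultimately show ?thesis unfolding sres_def by simp
qed

lemma res_edges:
  assumes p: "p \<in> V" and q: "q \<in> V"
  shows "res p q = (\<Sum>e\<in>E. (sres e q - sres e p)^2 / (4 * len e))"
proof -
  have "res p q = Bf (phi p q) (phi p q)" using res_energy[OF p q] by simp
  also have "\<dots> = (\<Sum>e\<in>E. (sres e q - sres e p)^2 / (4 * len e))"
    unfolding bform_def
    by (rule sum.cong) (auto simp: phi_edge_diff[OF p q] power2_eq_square)
  finally show ?thesis .
qed

lemma cross:
  assumes p: "p \<in> V" and q: "q \<in> V"
  shows "(\<Sum>e\<in>E. sres e q * (sres e q - sres e p) / len e) = 2 * res p q"
proof -
  have "(\<Sum>e\<in>E. sres e q * (sres e q - sres e p) / len e) = 2 * Bf (\<lambda>u. phi u q u) (phi p q)"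
    unfolding bform_def sum_distrib_left
    by (rule sum.cong) (auto simp: phi_edge_diff[OF p q] sres_def)
  also have "\<dots> = 2 * res p q" using green_phi[OF p q] res_self[OF q] by simp
  finally show ?thesis .
qed

lemma Epot_indep:
  assumes p: "p \<in> V" and q: "q \<in> V"
  shows "Epot p = Epot q"
proof -
  have four: "(\<Sum>e\<in>E. (sres e q - sres e p)^2 / len e) = 4 * res p q"
    unfolding res_edges[OF p q] sum_distrib_left
    by (rule sum.cong) (auto simp: field_simps dest: ends)
  have "Epot p = (\<Sum>e\<in>E. (sres e q - sres e p)^2 / len e + (sres e q)^2 / len e - 2 * (sres e q * (sres e q - sres e p) / len e))"
    unfolding Epot_def
    by (rule sum.cong) (auto simp: power2_eq_square diff_divide_distrib add_divide_distrib algebra_simps)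
  also have "\<dots> = 4 * res p q + Epot q - 2 * (2 * res p q)"
    unfolding sum_subtractf sum.distrib four Epot_def sum_distrib_left[symmetric] cross[OF p q] ..
  finally show ?thesis by simp
qed

lemma Kf_bound:
  assumes p0: "p0 \<in> V"
  shows "(1/2) * (\<Sum>p\<in>V. \<Sum>q\<in>V. res p q) \<le> (real (card V))^2 / 4 * Epot p0"
proof -
  let ?n = "real (card V)"
  have "(\<Sum>p\<in>V. \<Sum>q\<in>V. res p q) = (\<Sum>p\<in>V. \<Sum>q\<in>V. \<Sum>e\<in>E. (sres e q - sres e p)^2 / (4 * len e))"
    by (intro sum.cong refl) (simp add: res_edges)
  also have "\<dots> = (\<Sum>p\<in>V. \<Sum>e\<in>E. \<Sum>q\<in>V. (sres e q - sres e p)^2 / (4 * len e))"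
    by (rule sum.cong[OF refl], rule sum.swap)
  also have "\<dots> = (\<Sum>e\<in>E. \<Sum>p\<in>V. \<Sum>q\<in>V. (sres e q - sres e p)^2 / (4 * len e))"
    by (rule sum.swap)
  also have "\<dots> = (\<Sum>e\<in>E. (1 / (4 * len e)) * (\<Sum>p\<in>V. \<Sum>q\<in>V. (sres e q - sres e p)^2))"
    by (simp add: sum_distrib_left)
  also have "\<dots> \<le> (\<Sum>e\<in>E. (1 / (4 * len e)) * (2 * ?n * (\<Sum>p\<in>V. (sres e p)^2)))"
    by (intro sum_mono mult_left_mono var_bound[OF finV]) (auto dest: ends)
  also have "\<dots> = ?n / 2 * (\<Sum>e\<in>E. \<Sum>p\<in>V. (sres e p)^2 / len e)"
    unfolding sum_distrib_left
    by (intro sum.cong refl) (auto simp: field_simps sum_divide_distrib dest: ends)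
  also have "\<dots> = ?n / 2 * (\<Sum>p\<in>V. Epot p)"
    unfolding Epot_def by (subst sum.swap) simp
  also have "\<dots> = ?n / 2 * (\<Sum>p\<in>V. Epot p0)"
    using Epot_indep[OF _ p0] by (metis (no_types, lifting) sum.cong)
  also have "\<dots> = ?n / 2 * (?n * Epot p0)" by simp
  finally show ?thesis by (simp add: power2_eq_square)
qed

lemma sres_bound:
  assumes e: "e \<in> E" and p: "p \<in> V"
  shows "(sres e p)^2 \<le> (res (src e) (tgt e))^2" "(sres e p)^2 \<le> (len e)^2"
proof -
  have a: "src e \<in> V" and b: "tgt e \<in> V" using ends[OF e] by auto
  have "2 * phi (src e) (tgt e) p = res p (tgt e) + res (src e) (tgt e) - res p (src e)"
    using K4[OF a b p] .
  then have s: "sres e p = res (src e) (tgt e) - 2 * phi (src e) (tgt e) p"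
    unfolding sres_def using res_sym[OF p a] res_sym[OF p b] by simp
  have "\<bar>sres e p\<bar> \<le> res (src e) (tgt e)" using maxprin[OF a b p] s unfolding abs_le_iff by linarith
  then show 1: "(sres e p)^2 \<le> (res (src e) (tgt e))^2"
    by (metis abs_ge_zero power2_abs power_mono)
  have "res (src e) (tgt e) \<le> len e" "0 \<le> res (src e) (tgt e)"
    using res_le_len[OF e] res_nonneg[OF a b] by auto
  then have "(res (src e) (tgt e))^2 \<le> (len e)^2" by (intro power_mono) auto
  with 1 show "(sres e p)^2 \<le> (len e)^2" by linarith
qed

end




lemma sqdiv: "(L::real) \<noteq> 0 \<Longrightarrow> (L * x / D)^2 / L = L * x^2 / D^2"
  by (simp add: power_divide power_mult_distrib power2_eq_square)

context net
begin

lemma edge_terms: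
  assumes e: "e \<in> E" and p: "p \<in> V"
  shows "(sres e p)^2 / len e \<le> y_term1 V E src tgt len e \<and> (sres e p)^2 / len e \<le> y_term2 V E src tgt len p e"
proof -
  let ?a = "src e" and ?b = "tgt e" and ?L = "len e"
  have a: "?a \<in> V" and b: "?b \<in> V" and L: "?L > 0" using ends[OF e] by auto
  have sb1: "(sres e p)^2 \<le> (res ?a ?b)^2" and sb2: "(sres e p)^2 \<le> ?L^2"
    using sres_bound[OF e p] by auto
  show ?thesis
  proof (cases "connected_net V (E - {e}) src tgt")
    case True
    interpret n2: net V "E - {e}" src tgt len
      using finV finE ends True by unfold_locales auto
    let ?\<psi> = "n2.phi ?a ?b"
    let ?R = "?\<psi> ?a"
    have R0: "?R \<ge> 0" using n2.res_nonneg[OF a b] .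
    have LR: "?L + ?R > 0" using L R0 by linarith
    then have LR': "?L + ?R \<noteq> 0" by linarith
    have L': "?L \<noteq> 0" using L by linarith
    define \<chi> where "\<chi> w = ?L / (?L + ?R) * ?\<psi> w" for w
    have psiv: "is_voltage V (E - {e}) src tgt len ?a ?b ?\<psi>" using n2.phi_volt[OF a b] .
    have "is_voltage V E src tgt len ?a ?b \<chi>"
      unfolding is_voltage_lapl
    proof (intro conjI ballI allI impI)
      fix w assume "w \<notin> V" then show "\<chi> w = 0" using psiv unfolding is_voltage_lapl \<chi>_def by simp
    next
      show "\<chi> ?b = 0" using psiv unfolding is_voltage_lapl \<chi>_def by simp
    next
      fix w assume w: "w \<in> V"
      have l2: "lapl (E - {e}) src tgt len \<chi> w = ?L / (?L + ?R) * ((if w = ?a then 1 else 0) - (if w = ?b then 1 else 0))"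
        unfolding \<chi>_def lap_scale using n2.phi_lap[OF a b w] by simp
      have chib: "\<chi> ?b = 0" using psiv unfolding is_voltage_lapl \<chi>_def by simp
      have chia: "\<chi> ?a = ?L * ?R / (?L + ?R)" unfolding \<chi>_def by simp
      show "lapl E src tgt len \<chi> w = (if w = ?a then 1 else 0) - (if w = ?b then 1 else 0)"
      proof (cases "?a = ?b")
        case True
        then show ?thesis unfolding lap_remove[OF finE e] l2 by simp
      next
        case False
        have q: "?L * ?R / (?L + ?R) / ?L = ?R / (?L + ?R)" using L' by simp
        have one: "?L / (?L + ?R) + ?R / (?L + ?R) = 1" using LR' by (simp add: add_divide_distrib[symmetric])
        have h1: "?L / (?L + ?R) + ?L * ?R / (?L + ?R) / ?L = 1"
          using q one by simp
        have h2: "- (?L / (?L + ?R)) + (0 - ?L * ?R / (?L + ?R)) / ?L = -1"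
          using q one by (simp add: minus_divide_left[symmetric])
        show ?thesis
          unfolding lap_remove[OF finE e] l2
        proof (cases "w = ?a")
          case True
          then have "w \<noteq> ?b" using False by simp
          then show "?L / (?L + ?R) * ((if w = ?a then 1 else 0) - (if w = ?b then 1 else 0)) +
             ((if ?a = w then (\<chi> w - \<chi> (tgt e)) / len e else 0) + (if ?b = w then (\<chi> w - \<chi> (src e)) / len e else 0)) =
             (if w = ?a then 1 else 0) - (if w = ?b then 1 else 0)"
            using True h1 chib chia by simp
        next
          case nA: False
          show "?L / (?L + ?R) * ((if w = ?a then 1 else 0) - (if w = ?b then 1 else 0)) +
             ((if ?a = w then (\<chi> w - \<chi> (tgt e)) / len e else 0) + (if ?b = w then (\<chi> w - \<chi> (src e)) / len e else 0)) =
             (if w = ?a then 1 else 0) - (if w = ?b then 1 else 0)"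
          proof (cases "w = ?b")
            case True
            then show ?thesis using nA h2 chib chia by simp
          qed (use nA in auto)
        qed
      qed
    qed
    then have phieq: "phi ?a ?b = \<chi>" using phi_eq[OF a b] by blast
    have resab: "res ?a ?b = ?L * ?R / (?L + ?R)" using phieq unfolding \<chi>_def by simp
    have phip: "phi ?a ?b p = ?L / (?L + ?R) * ?\<psi> p" using phieq unfolding \<chi>_def by simp
    have "2 * phi ?a ?b p = res p ?b + res ?a ?b - res p ?a" using K4[OF a b p] .
    then have s: "sres e p = res ?a ?b - 2 * phi ?a ?b p"
      unfolding sres_def using res_sym[OF p a] res_sym[OF p b] by simp
    have s2: "sres e p = ?L * (?R - 2 * ?\<psi> p) / (?L + ?R)"
      unfolding s resab phip by (simp add: right_diff_distrib diff_divide_distrib)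
    have effR: "eff_res V (E - {e}) src tgt len ?a ?b = ?R"
      unfolding eff_res_def voltage_def n2.phi_def ..
    have Ra: "voltage V (E - {e}) src tgt len ?a p ?b = ?R - ?\<psi> p"
      unfolding voltage_def n2.phi_def[symmetric] using n2.phi_antisym[OF a b p] .
    have Rb: "voltage V (E - {e}) src tgt len ?b p ?a = ?\<psi> p"
      unfolding voltage_def n2.phi_def[symmetric] ..
    have t1: "y_term1 V E src tgt len e = ?L * ?R^2 / (?L + ?R)^2"
      unfolding y_term1_def using True effR by (simp add: Let_def)
    have t2: "y_term2 V E src tgt len p e = ?L * (?R - 2 * ?\<psi> p)^2 / (?L + ?R)^2"
      unfolding y_term2_def using True effR Ra Rb by (simp add: Let_def)
    have "(sres e p)^2 / ?L = ?L * (?R - 2 * ?\<psi> p)^2 / (?L + ?R)^2"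
      unfolding s2 using L' by (rule sqdiv)
    moreover have "(res ?a ?b)^2 / ?L = ?L * ?R^2 / (?L + ?R)^2"
      unfolding resab using L' by (rule sqdiv)
    moreover have "(sres e p)^2 / ?L \<le> (res ?a ?b)^2 / ?L"
      using sb1 L by (simp add: divide_right_mono)
    ultimately show ?thesis unfolding t1 t2 by simp
  next
    case False
    have t1: "y_term1 V E src tgt len e = ?L"
      unfolding y_term1_def using False lim_L[OF L] by simp
    have t2: "y_term2 V E src tgt len p e = ?L"
      unfolding y_term2_def using False lim_L[OF L] by simp
    have "(sres e p)^2 / ?L \<le> ?L^2 / ?L" using sb2 L by (simp add: divide_right_mono)
    also have "\<dots> = ?L" using L by (simp add: power2_eq_square)
    finally show ?thesis unfolding t1 t2 by simp
  qed
qed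

lemma y_ge_Epot:
  assumes p: "p \<in> V"
  shows "Epot p \<le> y_inv V E src tgt len p"
proof -
  have 1: "Epot p \<le> (\<Sum>e\<in>E. y_term1 V E src tgt len e)"
    unfolding Epot_def by (intro sum_mono) (use edge_terms[OF _ p] in blast)
  have 2: "Epot p \<le> (\<Sum>e\<in>E. y_term2 V E src tgt len p e)"
    unfolding Epot_def by (intro sum_mono) (use edge_terms[OF _ p] in blast)
  show ?thesis unfolding y_inv_def using 1 2 by linarith
qed

end

theorem corollary3p15:
  fixes V :: "'v set" and E :: "'e set" and src tgt :: "'e \<Rightarrow> 'v" and len :: "'e \<Rightarrow> real"
    and p :: 'v
  assumes "metrized_graph V E src tgt len" and "p \<in> V"
  shows "kirchhoff_index V E src tgt len
           \<le> (real (card V))\<^sup>2 / 4 * y_inv V E src tgt len p"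
proof -
  interpret net V E src tgt len
    using assms(1) unfolding metrized_graph_def by unfold_locales auto
  have "kirchhoff_index V E src tgt len = (1/2) * (\<Sum>p\<in>V. \<Sum>q\<in>V. res p q)"
    unfolding kirchhoff_index_def eff_res_def voltage_def phi_def ..
  also have "\<dots> \<le> (real (card V))^2 / 4 * Epot p" using Kf_bound[OF assms(2)] .
  also have "\<dots> \<le> (real (card V))\<^sup>2 / 4 * y_inv V E src tgt len p"
    using y_ge_Epot[OF assms(2)] by (intro mult_left_mono) auto
  finally show ?thesis .
qed


end
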